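(* Let $\mathcal M=(M,<,+,0,\ldots)$ be a definably complete locally o-minimal expansion of an ordered group. Let $f:(X,\tau_X)\to(Y,\tau_Y)$ be a definably closed definable continuous map between definable topological spaces such that $f^{-1}(y)$ is definably compact for every $y\in Y$. Then $f$ is definably proper.
   Context: "Definable" means definable in $\mathcal M$ with parameters. $\mathcal M$ is an expansion of an ordered group with dense order without endpoints; locally o-minimal: for every definable $Z\subseteq M$ and $a\in M$ there is an open interval $I\ni a$ with $Z\cap I$ a finite union of points and open intervals; definably complete: every definable subset of $M$ has sup and inf in $M\cup\{\pm\infty\}$. A definable topological space is a definable set with a topology having a definable family as open base. A definable subset is definably compact if, with the relative topology, every definable filtered family (any two members contain a common member) of nonempty closed subsets has nonempty intersection. $f$ is definably closed if $f(C)$ is closed for every definable closed $C\subseteq X$, and definably proper if $f^{-1}(C)$ is definably compact for every definably compact definable $C\subseteq Y$. *)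

theory Defs
  imports "HOL-Analysis.Analysis"
begin

text \<open>Points of M^n are lists of length n.  The definable sets (with parameters) of an
expansion of M are represented, following van den Dries, as a sequence S of
families of subsets of M^n closed under the usual operations.\<close>

definition tuples :: "nat \<Rightarrow> 'a list set" where
  "tuples n = {xs. length xs = n}"

definition is_structure :: "(nat \<Rightarrow> 'a list set set) \<Rightarrow> bool" where
  "is_structure S \<longleftrightarrow> (\<forall>n.
     S n \<subseteq> Pow (tuples n) \<and> {} \<in> S n \<and>
     (\<forall>A\<in>S n. tuples n - A \<in> S n) \<and>
     (\<forall>A\<in>S n. \<forall>B\<in>S n. A \<union> B \<in> S n) \<and>
     (\<forall>A\<in>S n. {x # xs | x xs. xs \<in> A} \<in> S (Suc n) \<and> {xs @ [x] | x xs. xs \<in> A} \<in> S (Suc n)) \<and>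
     (\<forall>i<n. \<forall>j<n. {xs \<in> tuples n. xs ! i = xs ! j} \<in> S n) \<and>
     (\<forall>A\<in>S (Suc n). butlast ` A \<in> S n))"

text \<open>S contains all parameters (singletons), the order and the graph of addition.\<close>
definition expands_ordered_group :: "(nat \<Rightarrow> ('a::{linorder,plus}) list set set) \<Rightarrow> bool" where
  "expands_ordered_group S \<longleftrightarrow>
     (\<forall>a. {[a]} \<in> S 1) \<and> {[x, y] | x y. x < y} \<in> S 2 \<and> {[x, y, x + y] | x y. True} \<in> S 3"

definition locally_o_minimal :: "(nat \<Rightarrow> ('a::linorder) list set set) \<Rightarrow> bool" where
  "locally_o_minimal S \<longleftrightarrow> (\<forall>Z\<in>S 1. \<forall>a. \<exists>l r. l < a \<and> a < r \<and>
     (\<exists>P Iv. finite P \<and> finite Iv \<and>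
        {x. [x] \<in> Z} \<inter> {l<..<r} = P \<union> (\<Union>(p, q)\<in>Iv. {p<..<q})))"

definition definably_complete :: "(nat \<Rightarrow> ('a::linorder) list set set) \<Rightarrow> bool" where
  "definably_complete S \<longleftrightarrow> (\<forall>Z\<in>S 1.
     ({x. [x] \<in> Z} \<noteq> {} \<and> (\<exists>b. \<forall>z\<in>{x. [x] \<in> Z}. z \<le> b) \<longrightarrow>
        (\<exists>s. (\<forall>z\<in>{x. [x] \<in> Z}. z \<le> s) \<and> (\<forall>t. (\<forall>z\<in>{x. [x] \<in> Z}. z \<le> t) \<longrightarrow> s \<le> t))) \<and>
     ({x. [x] \<in> Z} \<noteq> {} \<and> (\<exists>b. \<forall>z\<in>{x. [x] \<in> Z}. b \<le> z) \<longrightarrow>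
        (\<exists>s. (\<forall>z\<in>{x. [x] \<in> Z}. s \<le> z) \<and> (\<forall>t. (\<forall>z\<in>{x. [x] \<in> Z}. t \<le> z) \<longrightarrow> t \<le> s))))"

definition fiber :: "'a list set \<Rightarrow> 'a list \<Rightarrow> 'a list set" where
  "fiber F u = {x. u @ x \<in> F}"

text \<open>A definable family of subsets of M^n: members fiber F u for u in a definable U in M^k.\<close>
definition definable_family :: "(nat \<Rightarrow> 'a list set set) \<Rightarrow> nat \<Rightarrow> nat \<Rightarrow> 'a list set \<Rightarrow> 'a list set \<Rightarrow> bool" where
  "definable_family S k n U F \<longleftrightarrow> U \<in> S k \<and> F \<in> S (k + n)"

definition definable_top_space :: "(nat \<Rightarrow> 'a list set set) \<Rightarrow> nat \<Rightarrow> 'a list topology \<Rightarrow> bool" where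
  "definable_top_space S n T \<longleftrightarrow> topspace T \<in> S n \<and>
     (\<exists>k U F. definable_family S k n U F \<and>
        (\<forall>u\<in>U. openin T (fiber F u)) \<and>
        (\<forall>V. openin T V \<longrightarrow> (\<forall>x\<in>V. \<exists>u\<in>U. x \<in> fiber F u \<and> fiber F u \<subseteq> V)))"

definition definably_compact :: "(nat \<Rightarrow> 'a list set set) \<Rightarrow> nat \<Rightarrow> 'a list topology \<Rightarrow> 'a list set \<Rightarrow> bool" where
  "definably_compact S n T C \<longleftrightarrow> C \<in> S n \<and> C \<subseteq> topspace T \<and>
     (\<forall>k U F. definable_family S k n U F \<and> U \<noteq> {} \<and>
        (\<forall>u\<in>U. fiber F u \<noteq> {} \<and> closedin (subtopology T C) (fiber F u)) \<and>
        (\<forall>u\<in>U. \<forall>v\<in>U. \<exists>w\<in>U. fiber F w \<subseteq> fiber F u \<inter> fiber F v)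
        \<longrightarrow> (\<Inter>u\<in>U. fiber F u) \<noteq> {})"

definition definable_map :: "(nat \<Rightarrow> 'a list set set) \<Rightarrow> nat \<Rightarrow> nat \<Rightarrow> 'a list set \<Rightarrow> ('a list \<Rightarrow> 'a list) \<Rightarrow> bool" where
  "definable_map S n m X f \<longleftrightarrow> {x @ f x | x. x \<in> X} \<in> S (n + m)"

end

theory Submission
  imports Defs
begin


definition Def :: "(nat \<Rightarrow> 'a list set set) \<Rightarrow> nat \<Rightarrow> ('a list \<Rightarrow> bool) \<Rightarrow> bool" where
  "Def S N P \<longleftrightarrow> {xs \<in> tuples N. P xs} \<in> S N"

context
  fixes S :: "nat \<Rightarrow> 'a list set set"
  assumes st: "is_structure S"
begin

lemma stN: "S N \<subseteq> Pow (tuples N) \<and> {} \<in> S N \<and>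
     (\<forall>A\<in>S N. tuples N - A \<in> S N) \<and>
     (\<forall>A\<in>S N. \<forall>B\<in>S N. A \<union> B \<in> S N) \<and>
     (\<forall>A\<in>S N. {x # xs | x xs. xs \<in> A} \<in> S (Suc N) \<and> {xs @ [x] | x xs. xs \<in> A} \<in> S (Suc N)) \<and>
     (\<forall>i<N. \<forall>j<N. {xs \<in> tuples N. xs ! i = xs ! j} \<in> S N) \<and>
     (\<forall>A\<in>S (Suc N). butlast ` A \<in> S N)"
  using st unfolding is_structure_def by (rule spec)

lemma st_sub: "A \<in> S N \<Longrightarrow> A \<subseteq> tuples N" using stN[THEN conjunct1] by blast
lemma st_empty: "{} \<in> S N" using stN[THEN conjunct2, THEN conjunct1] .
lemma st_compl: "A \<in> S N \<Longrightarrow> tuples N - A \<in> S N" using stN[THEN conjunct2, THEN conjunct2, THEN conjunct1] by blast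
lemma st_union: "A \<in> S N \<Longrightarrow> B \<in> S N \<Longrightarrow> A \<union> B \<in> S N" using stN[THEN conjunct2, THEN conjunct2, THEN conjunct2, THEN conjunct1] by blast
lemma st_pre: "A \<in> S N \<Longrightarrow> {x # xs | x xs. xs \<in> A} \<in> S (Suc N)" using stN[THEN conjunct2, THEN conjunct2, THEN conjunct2, THEN conjunct2, THEN conjunct1] by blast
lemma st_diag: "i < N \<Longrightarrow> j < N \<Longrightarrow> {xs \<in> tuples N. xs ! i = xs ! j} \<in> S N" using stN[THEN conjunct2, THEN conjunct2, THEN conjunct2, THEN conjunct2, THEN conjunct2, THEN conjunct1] by blast
lemma st_proj: "A \<in> S (Suc N) \<Longrightarrow> butlast ` A \<in> S N" using stN[THEN conjunct2, THEN conjunct2, THEN conjunct2, THEN conjunct2, THEN conjunct2, THEN conjunct2] by blast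

lemma sub_tuples: "A \<in> S N \<Longrightarrow> A \<subseteq> tuples N"
  by (rule st_sub)

lemma Def_cong: "(\<And>xs. length xs = N \<Longrightarrow> P xs = Q xs) \<Longrightarrow> Def S N P \<Longrightarrow> Def S N Q"
proof -
  assume h: "\<And>xs. length xs = N \<Longrightarrow> P xs = Q xs" and d: "Def S N P"
  have "{xs \<in> tuples N. P xs} = {xs \<in> tuples N. Q xs}" using h by (auto simp: tuples_def)
  then show ?thesis using d by (simp add: Def_def)
qed

lemma Def_set: "A \<in> S N \<Longrightarrow> Def S N (\<lambda>xs. xs \<in> A)"
proof -
  assume a: "A \<in> S N"
  then have "{xs \<in> tuples N. xs \<in> A} = A" using sub_tuples by blast
  then show ?thesis using a by (simp add: Def_def)
qed

lemma Def_True: "Def S N (\<lambda>_. True)"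
proof -
  have "tuples N - {} \<in> S N" using st_compl[OF st_empty] .
  then show ?thesis by (simp add: Def_def)
qed

lemma Def_neg: "Def S N P \<Longrightarrow> Def S N (\<lambda>xs. \<not> P xs)"
proof -
  assume "Def S N P"
  then have "tuples N - {xs \<in> tuples N. P xs} \<in> S N" unfolding Def_def by (rule st_compl)
  moreover have "tuples N - {xs \<in> tuples N. P xs} = {xs \<in> tuples N. \<not> P xs}" by blast
  ultimately show ?thesis by (simp add: Def_def)
qed

lemma Def_disj: "Def S N P \<Longrightarrow> Def S N Q \<Longrightarrow> Def S N (\<lambda>xs. P xs \<or> Q xs)"
proof -
  assume "Def S N P" "Def S N Q"
  then have "{xs \<in> tuples N. P xs} \<union> {xs \<in> tuples N. Q xs} \<in> S N" unfolding Def_def by (rule st_union)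
  moreover have "{xs \<in> tuples N. P xs} \<union> {xs \<in> tuples N. Q xs} = {xs \<in> tuples N. P xs \<or> Q xs}" by blast
  ultimately show ?thesis by (simp add: Def_def)
qed

lemma Def_conj: "Def S N P \<Longrightarrow> Def S N Q \<Longrightarrow> Def S N (\<lambda>xs. P xs \<and> Q xs)"
proof -
  assume "Def S N P" "Def S N Q"
  then have "Def S N (\<lambda>xs. \<not> (\<not> P xs \<or> \<not> Q xs))" using Def_neg Def_disj by blast
  then show ?thesis by simp
qed

lemma Def_ex: "Def S (Suc N) P \<Longrightarrow> Def S N (\<lambda>xs. \<exists>x. P (xs @ [x]))"
proof -
  assume "Def S (Suc N) P"
  then have "butlast ` {ys \<in> tuples (Suc N). P ys} \<in> S N" unfolding Def_def by (rule st_proj)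
  moreover have "butlast ` {ys \<in> tuples (Suc N). P ys} = {xs \<in> tuples N. \<exists>x. P (xs @ [x])}"
  proof safe
    fix ys assume "ys \<in> tuples (Suc N)" "P ys"
    then show "butlast ys \<in> tuples N" by (simp add: tuples_def)
    have "ys \<noteq> []" using \<open>ys \<in> tuples (Suc N)\<close> by (auto simp: tuples_def)
    then have "ys = butlast ys @ [last ys]" by simp
    then show "\<exists>x. P (butlast ys @ [x])" using \<open>P ys\<close> by metis
  next
    fix xs x assume "xs \<in> tuples N" "P (xs @ [x])"
    then show "xs \<in> butlast ` {ys \<in> tuples (Suc N). P ys}"
      by (intro image_eqI[of _ _ "xs @ [x]"]) (auto simp: tuples_def)
  qed
  ultimately show ?thesis by (simp add: Def_def)
qed

lemma Def_exs: "Def S (N + K) P \<Longrightarrow> Def S N (\<lambda>xs. \<exists>ys. length ys = K \<and> P (xs @ ys))"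
proof (induction K arbitrary: P)
  case 0
  then show ?case by (simp cong: conj_cong)
next
  case (Suc K)
  have "Def S (N + K) (\<lambda>zs. \<exists>x. P (zs @ [x]))" using Def_ex Suc.prems by simp
  then have "Def S N (\<lambda>xs. \<exists>ys. length ys = K \<and> (\<exists>x. P ((xs @ ys) @ [x])))" using Suc.IH by blast
  then show ?case
  proof (rule Def_cong[rotated])
    fix xs :: "'a list"
    show "(\<exists>ys. length ys = K \<and> (\<exists>x. P ((xs @ ys) @ [x]))) = (\<exists>ys. length ys = Suc K \<and> P (xs @ ys))"
    proof
      assume "\<exists>ys. length ys = K \<and> (\<exists>x. P ((xs @ ys) @ [x]))"
      then obtain ys x where "length ys = K" "P ((xs @ ys) @ [x])" by blast
      then show "\<exists>ys. length ys = Suc K \<and> P (xs @ ys)" by (intro exI[of _ "ys @ [x]"]) simp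
    next
      assume "\<exists>ys. length ys = Suc K \<and> P (xs @ ys)"
      then obtain ys where y: "length ys = Suc K" "P (xs @ ys)" by blast
      then have "ys = butlast ys @ [last ys]" by (metis Zero_neq_Suc append_butlast_last_id list.size(3))
      then show "\<exists>ys. length ys = K \<and> (\<exists>x. P ((xs @ ys) @ [x]))" using y
        by (intro exI[of _ "butlast ys"]) (metis append_assoc diff_Suc_1 length_butlast)
    qed
  qed
qed

lemma Def_eq: "i < N \<Longrightarrow> j < N \<Longrightarrow> Def S N (\<lambda>xs. xs ! i = xs ! j)"
  unfolding Def_def by (rule st_diag)

lemma Def_pre: "A \<in> S N \<Longrightarrow> Def S (K + N) (\<lambda>zs. drop K zs \<in> A)"
proof (induction K)
  case 0
  then show ?case using Def_set by simp
next
  case (Suc K)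
  have h: "{x # xs | x xs. xs \<in> {zs \<in> tuples (K + N). drop K zs \<in> A}} \<in> S (Suc (K + N))"
    using Suc.IH[OF Suc.prems] unfolding Def_def by (rule st_pre)
  have "{x # xs | x xs. xs \<in> {zs \<in> tuples (K + N). drop K zs \<in> A}} = {zs \<in> tuples (Suc K + N). drop (Suc K) zs \<in> A}"
  proof safe
    fix zs assume "zs \<in> tuples (Suc K + N)" "drop (Suc K) zs \<in> A"
    then show "\<exists>x xs. zs = x # xs \<and> xs \<in> {zs \<in> tuples (K + N). drop K zs \<in> A}"
      by (cases zs) (auto simp: tuples_def)
  qed (auto simp: tuples_def)
  then show ?case using h by (simp add: Def_def)
qed

lemma Def_all_less: "(\<And>i. i < (q::nat) \<Longrightarrow> Def S N (P i)) \<Longrightarrow> Def S N (\<lambda>xs. \<forall>i<q. P i xs)"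
proof (induction q)
  case 0
  then show ?case using Def_True by simp
next
  case (Suc q)
  have "Def S N (\<lambda>xs. (\<forall>i<q. P i xs) \<and> P q xs)" using Suc by (intro Def_conj) auto
  then show ?case by (rule Def_cong[rotated]) (auto simp: less_Suc_eq)
qed

lemma Def_atom:
  assumes A: "A \<in> S q" and sg: "\<And>i. i < q \<Longrightarrow> \<sigma> i < N"
  shows "Def S N (\<lambda>xs. map (\<lambda>i. xs ! \<sigma> i) [0..<q] \<in> A)"
proof -
  have sg': "\<And>i. i < q \<Longrightarrow> \<sigma> i < N + q" using sg by (simp add: trans_less_add1)
  have "Def S (N + q) (\<lambda>zs. drop N zs \<in> A \<and> (\<forall>i<q. zs ! \<sigma> i = zs ! (N + i)))"
    using Def_pre[OF A, of N] sg' by (intro Def_conj Def_all_less Def_eq) auto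
  then have "Def S N (\<lambda>xs. \<exists>ys. length ys = q \<and> (drop N (xs @ ys) \<in> A \<and> (\<forall>i<q. (xs @ ys) ! \<sigma> i = (xs @ ys) ! (N + i))))"
    by (rule Def_exs)
  then show ?thesis
  proof (rule Def_cong[rotated])
    fix xs :: "'a list" assume l: "length xs = N"
    show "(\<exists>ys. length ys = q \<and> (drop N (xs @ ys) \<in> A \<and> (\<forall>i<q. (xs @ ys) ! \<sigma> i = (xs @ ys) ! (N + i))))
       = (map (\<lambda>i. xs ! \<sigma> i) [0..<q] \<in> A)"
    proof
      assume "\<exists>ys. length ys = q \<and> (drop N (xs @ ys) \<in> A \<and> (\<forall>i<q. (xs @ ys) ! \<sigma> i = (xs @ ys) ! (N + i)))"
      then obtain ys where y: "length ys = q" "ys \<in> A" "\<forall>i<q. xs ! \<sigma> i = ys ! i"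
        using l sg by (auto simp: nth_append)
      have "map (\<lambda>i. xs ! \<sigma> i) [0..<q] = ys" using y by (intro nth_equalityI) auto
      then show "map (\<lambda>i. xs ! \<sigma> i) [0..<q] \<in> A" using y by simp
    next
      assume "map (\<lambda>i. xs ! \<sigma> i) [0..<q] \<in> A"
      then show "\<exists>ys. length ys = q \<and> (drop N (xs @ ys) \<in> A \<and> (\<forall>i<q. (xs @ ys) ! \<sigma> i = (xs @ ys) ! (N + i)))"
        using l sg by (intro exI[of _ "map (\<lambda>i. xs ! \<sigma> i) [0..<q]"]) (auto simp: nth_append)
    qed
  qed
qed

lemma Def_block:
  assumes A: "A \<in> S q" and "p + q \<le> N"
  shows "Def S N (\<lambda>xs. take q (drop p xs) \<in> A)"
proof -
  have "Def S N (\<lambda>xs. map (\<lambda>i. xs ! (p + i)) [0..<q] \<in> A)" using assms by (intro Def_atom) auto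
  then show ?thesis
  proof (rule Def_cong[rotated])
    fix xs :: "'a list" assume "length xs = N"
    then have "map (\<lambda>i. xs ! (p + i)) [0..<q] = take q (drop p xs)" using assms(2)
      by (intro nth_equalityI) auto
    then show "(map (\<lambda>i. xs ! (p + i)) [0..<q] \<in> A) = (take q (drop p xs) \<in> A)" by simp
  qed
qed

lemma Def_block2:
  assumes A: "A \<in> S (q1 + q2)" and "p1 + q1 \<le> N" and "p2 + q2 \<le> N"
  shows "Def S N (\<lambda>xs. take q1 (drop p1 xs) @ take q2 (drop p2 xs) \<in> A)"
proof -
  have "Def S N (\<lambda>xs. map (\<lambda>i. xs ! (if i < q1 then p1 + i else p2 + (i - q1))) [0..<q1+q2] \<in> A)"
    using assms by (intro Def_atom) auto
  then show ?thesis
  proof (rule Def_cong[rotated])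
    fix xs :: "'a list" assume "length xs = N"
    then have "map (\<lambda>i. xs ! (if i < q1 then p1 + i else p2 + (i - q1))) [0..<q1+q2] = take q1 (drop p1 xs) @ take q2 (drop p2 xs)"
      using assms(2,3) by (intro nth_equalityI) (auto simp: nth_append)
    then show "(map (\<lambda>i. xs ! (if i < q1 then p1 + i else p2 + (i - q1))) [0..<q1+q2] \<in> A) = (take q1 (drop p1 xs) @ take q2 (drop p2 xs) \<in> A)" by simp
  qed
qed

lemma Def_const:
  assumes eg: "\<forall>a. {[a]} \<in> S 1" and "i < N"
  shows "Def S N (\<lambda>xs. xs ! i = a)"
proof -
  have "Def S N (\<lambda>xs. take 1 (drop i xs) \<in> {[a]})" using assms by (intro Def_block) auto
  then show ?thesis
  proof (rule Def_cong[rotated])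
    fix xs :: "'a list" assume "length xs = N"
    then show "(take 1 (drop i xs) \<in> {[a]}) = (xs ! i = a)" using assms(2)
      by (subst Cons_nth_drop_Suc[symmetric]) auto
  qed
qed

lemma Def_eq_list:
  assumes eg: "\<forall>a. {[a]} \<in> S 1" and "length u = q" "p + q \<le> N"
  shows "Def S N (\<lambda>xs. take q (drop p xs) = u)"
proof -
  have "Def S N (\<lambda>xs. \<forall>i<q. xs ! (p + i) = u ! i)" using assms by (intro Def_all_less Def_const) auto
  then show ?thesis
  proof (rule Def_cong[rotated])
    fix xs :: "'a list" assume "length xs = N"
    then show "(\<forall>i<q. xs ! (p + i) = u ! i) = (take q (drop p xs) = u)" using assms(2,3)
      by (auto simp: list_eq_iff_nth_eq)
  qed
qed

lemma fiber_in:
  assumes eg: "\<forall>a. {[a]} \<in> S 1" and A: "A \<in> S (k + n)" and u: "length u = k"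
  shows "fiber A u \<in> S n"
proof -
  have d1: "Def S (n + k) (\<lambda>zs. take k (drop n zs) = u)"
    by (rule Def_eq_list[OF eg u]) simp
  have d2: "Def S (n + k) (\<lambda>zs. take k (drop n zs) @ take n (drop 0 zs) \<in> A)"
    by (rule Def_block2[OF A]) simp_all
  have "Def S (n + k) (\<lambda>zs. take k (drop n zs) = u \<and> take k (drop n zs) @ take n (drop 0 zs) \<in> A)"
    by (rule Def_conj[OF d1 d2])
  then have "Def S n (\<lambda>xs. \<exists>ys. length ys = k \<and> (take k (drop n (xs @ ys)) = u \<and> take k (drop n (xs @ ys)) @ take n (drop 0 (xs @ ys)) \<in> A))"
    by (rule Def_exs)
  then have "Def S n (\<lambda>xs. u @ xs \<in> A)"
  proof (rule Def_cong[rotated])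
    fix xs :: "'a list" assume l: "length xs = n"
    have e: "take k (drop n (xs @ ys)) = ys" "take n (drop 0 (xs @ ys)) = xs" if "length ys = k" for ys
      using l that by simp_all
    show "(\<exists>ys. length ys = k \<and> take k (drop n (xs @ ys)) = u \<and> take k (drop n (xs @ ys)) @ take n (drop 0 (xs @ ys)) \<in> A) = (u @ xs \<in> A)"
    proof
      assume "\<exists>ys. length ys = k \<and> take k (drop n (xs @ ys)) = u \<and> take k (drop n (xs @ ys)) @ take n (drop 0 (xs @ ys)) \<in> A"
      then obtain ys where "length ys = k" "take k (drop n (xs @ ys)) = u" "take k (drop n (xs @ ys)) @ take n (drop 0 (xs @ ys)) \<in> A" by blast
      then show "u @ xs \<in> A" using e by metis
    next
      assume "u @ xs \<in> A"
      then show "\<exists>ys. length ys = k \<and> take k (drop n (xs @ ys)) = u \<and> take k (drop n (xs @ ys)) @ take n (drop 0 (xs @ ys)) \<in> A"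
        using e[of u] u by (intro exI[of _ u]) simp
    qed
  qed
  then have "{xs \<in> tuples n. u @ xs \<in> A} \<in> S n" by (simp add: Def_def)
  moreover have "{xs \<in> tuples n. u @ xs \<in> A} = fiber A u"
    using sub_tuples[OF A] u by (auto simp: fiber_def tuples_def)
  ultimately show ?thesis by simp
qed

end



theorem lemma4p11:
  fixes S :: "nat \<Rightarrow> ('a::{group_add,dense_linorder,no_top,no_bot}) list set set"
    and TX TY :: "'a list topology" and f :: "'a list \<Rightarrow> 'a list" and n m :: nat
  assumes ord_right: "\<And>a b c::'a. a < b \<Longrightarrow> a + c < b + c"
    and ord_left: "\<And>a b c::'a. a < b \<Longrightarrow> c + a < c + b"
    and "is_structure S" and "expands_ordered_group S"
    and "locally_o_minimal S" and "definably_complete S"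
    and "definable_top_space S n TX" and "definable_top_space S m TY"
    and "definable_map S n m (topspace TX) f" and "continuous_map TX TY f"
    and closed: "\<forall>C. C \<in> S n \<and> closedin TX C \<longrightarrow> closedin TY (f ` C)"
    and fibres: "\<forall>y\<in>topspace TY. definably_compact S n TX {x \<in> topspace TX. f x = y}"
  shows "\<forall>C. definably_compact S m TY C \<longrightarrow> definably_compact S n TX {x \<in> topspace TX. f x \<in> C}"
proof (intro allI impI)
  note st = \<open>is_structure S\<close>
  have eg: "\<forall>a. {[a]} \<in> S 1" using \<open>expands_ordered_group S\<close> by (simp add: expands_ordered_group_def)
  have Xs: "topspace TX \<in> S n" using \<open>definable_top_space S n TX\<close> by (simp add: definable_top_space_def)
  then have Xl: "\<And>x. x \<in> topspace TX \<Longrightarrow> length x = n" using sub_tuples[OF st] by (auto simp: tuples_def)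
  obtain k' U' B' where fam: "definable_family S k' n U' B'"
    and bop: "\<forall>u\<in>U'. openin TX (fiber B' u)"
    and bas: "\<forall>V. openin TX V \<longrightarrow> (\<forall>x\<in>V. \<exists>u\<in>U'. x \<in> fiber B' u \<and> fiber B' u \<subseteq> V)"
    using \<open>definable_top_space S n TX\<close> unfolding definable_top_space_def by blast
  have U's: "U' \<in> S k'" and B's: "B' \<in> S (k' + n)" using fam by (auto simp: definable_family_def)
  define Gs where "Gs = {x @ f x | x. x \<in> topspace TX}"
  have Gs: "Gs \<in> S (n + m)" using \<open>definable_map S n m (topspace TX) f\<close> by (simp add: definable_map_def Gs_def)
  have fl: "\<And>x. x \<in> topspace TX \<Longrightarrow> length (f x) = m"
  proof -
    fix x assume x: "x \<in> topspace TX"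
    then have "x @ f x \<in> Gs" by (auto simp: Gs_def)
    then show "length (f x) = m" using sub_tuples[OF st Gs] Xl[OF x] by (auto simp: tuples_def)
  qed
  have Gchar: "\<And>x y. length x = n \<Longrightarrow> (x @ y \<in> Gs) = (x \<in> topspace TX \<and> y = f x)"
  proof -
    fix x y :: "'a list" assume l: "length x = n"
    show "(x @ y \<in> Gs) = (x \<in> topspace TX \<and> y = f x)"
    proof
      assume "x @ y \<in> Gs"
      then obtain x' where x': "x' \<in> topspace TX" "x @ y = x' @ f x'" by (auto simp: Gs_def)
      then have "x = x' \<and> y = f x'" using Xl[OF x'(1)] l by (simp add: append_eq_append_conv)
      then show "x \<in> topspace TX \<and> y = f x" using x' by simp
    qed (auto simp: Gs_def)
  qed
  have clos: "TX closure_of A \<in> S n" if A: "A \<in> S n" "A \<subseteq> topspace TX" for A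
  proof -
    define P1 where "P1 = (\<lambda>zs::'a list. take k' (drop n zs) @ take n (drop (n + k') zs) \<in> B' \<and> take n (drop (n + k') zs) \<in> A)"
    have d1: "Def S (n + k' + n) P1" unfolding P1_def using st A B's
      by (intro Def_conj Def_block2 Def_block) auto
    define P2 where "P2 = (\<lambda>ys::'a list. take k' (drop n ys) \<in> U' \<and> take k' (drop n ys) @ take n (drop 0 ys) \<in> B'
        \<and> \<not> (\<exists>a. length a = n \<and> P1 (ys @ a)))"
    have d2: "Def S (n + k') P2" unfolding P2_def using st A B's U's Def_exs[OF st d1]
      by (intro Def_conj Def_block2 Def_block Def_neg) auto
    define P3 where "P3 = (\<lambda>x::'a list. take n (drop 0 x) \<in> topspace TX \<and> \<not> (\<exists>w. length w = k' \<and> P2 (x @ w)))"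
    have d3: "Def S n P3" unfolding P3_def using st Xs Def_exs[OF st d2]
      by (intro Def_conj Def_block Def_neg) auto
    have U'l: "\<And>w. w \<in> U' \<Longrightarrow> length w = k'" using sub_tuples[OF st U's] by (auto simp: tuples_def)
    have B'l: "\<And>w a. w @ a \<in> B' \<Longrightarrow> length w = k' \<Longrightarrow> length a = n" using sub_tuples[OF st B's] by (auto simp: tuples_def)
    have Al: "\<And>a. a \<in> A \<Longrightarrow> length a = n" using sub_tuples[OF st A(1)] by (auto simp: tuples_def)
    have P3c: "P3 x = (x \<in> topspace TX \<and> (\<forall>w\<in>U'. x \<in> fiber B' w \<longrightarrow> (\<exists>a\<in>A. a \<in> fiber B' w)))"
      if lx: "length x = n" for x
    proof -
      have P2c: "P2 (x @ w) = (w \<in> U' \<and> x \<in> fiber B' w \<and> \<not> (\<exists>a\<in>A. a \<in> fiber B' w))" if lw: "length w = k'" for w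
      proof -
        have e1: "take k' (drop n (x @ w)) = w" "take n (drop 0 (x @ w)) = x" using lx lw by simp_all
        have e2: "P1 ((x @ w) @ a) = (w @ a \<in> B' \<and> a \<in> A)" if la: "length a = n" for a
        proof -
          have "take k' (drop n ((x @ w) @ a)) = w" "take n (drop (n + k') ((x @ w) @ a)) = a"
            using lx lw la by simp_all
          then show ?thesis unfolding P1_def by simp
        qed
        have "(\<exists>a. length a = n \<and> P1 ((x @ w) @ a)) = (\<exists>a\<in>A. a \<in> fiber B' w)"
          using e2 Al unfolding fiber_def by blast
        then show ?thesis unfolding P2_def e1 fiber_def by simp
      qed
      have "(\<exists>w. length w = k' \<and> P2 (x @ w)) = (\<exists>w\<in>U'. x \<in> fiber B' w \<and> \<not> (\<exists>a\<in>A. a \<in> fiber B' w))"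
        using P2c U'l by blast
      moreover have "take n (drop 0 x) = x" using lx by simp
      ultimately show ?thesis unfolding P3_def by auto
    qed
    have clc: "TX closure_of A = {x \<in> topspace TX. (\<forall>w\<in>U'. x \<in> fiber B' w \<longrightarrow> (\<exists>a\<in>A. a \<in> fiber B' w))}"
    proof (rule set_eqI, rule iffI)
      fix x assume "x \<in> TX closure_of A"
      then show "x \<in> {x \<in> topspace TX. (\<forall>w\<in>U'. x \<in> fiber B' w \<longrightarrow> (\<exists>a\<in>A. a \<in> fiber B' w))}"
        using bop unfolding closure_of_def by blast
    next
      fix x assume x: "x \<in> {x \<in> topspace TX. (\<forall>w\<in>U'. x \<in> fiber B' w \<longrightarrow> (\<exists>a\<in>A. a \<in> fiber B' w))}"
      show "x \<in> TX closure_of A" unfolding closure_of_def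
      proof (safe)
        show "x \<in> topspace TX" using x by simp
      next
        fix T assume "x \<in> T" "openin TX T"
        then obtain w where "w \<in> U'" "x \<in> fiber B' w" "fiber B' w \<subseteq> T" using bas by blast
        then show "\<exists>y\<in>A. y \<in> T" using x by blast
      qed
    qed
    have "{x \<in> tuples n. P3 x} = TX closure_of A"
      using P3c Xl unfolding clc by (auto simp: tuples_def)
    then show ?thesis using d3 by (simp add: Def_def)
  qed
  fix C assume dc: "definably_compact S m TY C"
  have Cs: "C \<in> S m" and CY: "C \<subseteq> topspace TY" using dc by (auto simp: definably_compact_def)
  define D where "D = {x \<in> topspace TX. f x \<in> C}"
  have Ds: "D \<in> S n"
  proof -
    define Q where "Q = (\<lambda>zs::'a list. take n (drop 0 zs) @ take m (drop n zs) \<in> Gs \<and> take m (drop n zs) \<in> C)"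
    have "Def S (n + m) Q" unfolding Q_def using st Gs Cs by (intro Def_conj Def_block2 Def_block) auto
    then have d: "Def S n (\<lambda>xs. \<exists>ys. length ys = m \<and> Q (xs @ ys))" by (rule Def_exs[OF st])
    have Qe: "Q (xs @ ys) = (xs @ ys \<in> Gs \<and> ys \<in> C)" if "length xs = n" "length ys = m" for xs ys
      unfolding Q_def using that by simp
    have "(\<exists>ys. length ys = m \<and> Q (xs @ ys)) = (xs \<in> topspace TX \<and> f xs \<in> C)" if lx: "length xs = n" for xs
    proof
      assume "\<exists>ys. length ys = m \<and> Q (xs @ ys)"
      then obtain ys where "length ys = m" "Q (xs @ ys)" by blast
      then have "xs @ ys \<in> Gs" "ys \<in> C" using Qe[OF lx, of ys] by simp_all
      then show "xs \<in> topspace TX \<and> f xs \<in> C" using Gchar[OF lx, of ys] by simp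
    next
      assume h: "xs \<in> topspace TX \<and> f xs \<in> C"
      then have l: "length (f xs) = m" and g: "xs @ f xs \<in> Gs" using fl Gchar[OF lx, of "f xs"] by auto
      then have "Q (xs @ f xs)" using Qe[OF lx l] h by simp
      then show "\<exists>ys. length ys = m \<and> Q (xs @ ys)" using l by blast
    qed
    then have "{xs \<in> tuples n. \<exists>ys. length ys = m \<and> Q (xs @ ys)} = {xs \<in> tuples n. xs \<in> topspace TX \<and> f xs \<in> C}"
      by (auto simp: tuples_def)
    also have "\<dots> = D" unfolding D_def using Xl by (auto simp: tuples_def)
    finally have "{xs \<in> tuples n. \<exists>ys. length ys = m \<and> Q (xs @ ys)} = D" .
    then show ?thesis using d by (simp add: Def_def)
  qed
  show "definably_compact S n TX {x \<in> topspace TX. f x \<in> C}"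
    unfolding definably_compact_def D_def[symmetric]
  proof (intro conjI allI impI)
    show "D \<in> S n" by (rule Ds)
    show "D \<subseteq> topspace TX" by (auto simp: D_def)
  next
    fix k U F assume H: "definable_family S k n U F \<and> U \<noteq> {} \<and>
        (\<forall>u\<in>U. fiber F u \<noteq> {} \<and> closedin (subtopology TX D) (fiber F u)) \<and>
        (\<forall>u\<in>U. \<forall>v\<in>U. \<exists>w\<in>U. fiber F w \<subseteq> fiber F u \<inter> fiber F v)"
    have HF: "definable_family S k n U F" using H by (rule conjunct1)
    have HU: "U \<noteq> {}" using H by (rule conjunct2[THEN conjunct1])
    have Hc: "\<forall>u\<in>U. fiber F u \<noteq> {} \<and> closedin (subtopology TX D) (fiber F u)" using H by (rule conjunct2[THEN conjunct2, THEN conjunct1])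
    have Hf: "\<forall>u\<in>U. \<forall>v\<in>U. \<exists>w\<in>U. fiber F w \<subseteq> fiber F u \<inter> fiber F v" using H by (rule conjunct2[THEN conjunct2, THEN conjunct2])
    have Hne: "\<And>u. u \<in> U \<Longrightarrow> fiber F u \<noteq> {}" and Hcl: "\<And>u. u \<in> U \<Longrightarrow> closedin (subtopology TX D) (fiber F u)" using Hc by blast+
    have Us: "U \<in> S k" and Fs: "F \<in> S (k + n)" using HF by (auto simp: definable_family_def)
    have Ul: "\<And>u. u \<in> U \<Longrightarrow> length u = k" using sub_tuples[OF st Us] by (auto simp: tuples_def)
    have Fl: "\<And>u x. u @ x \<in> F \<Longrightarrow> length u = k \<Longrightarrow> length x = n" using sub_tuples[OF st Fs] by (auto simp: tuples_def)
    have FuD: "\<And>u. u \<in> U \<Longrightarrow> fiber F u \<subseteq> D"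
    proof -
      fix u assume "u \<in> U"
      then have "fiber F u \<subseteq> topspace (subtopology TX D)" using Hcl closedin_subset by blast
      then show "fiber F u \<subseteq> D" by simp
    qed
    have Kd: "\<exists>T. closedin TX T \<and> fiber F u = T \<inter> D" if "u \<in> U" for u
      using Hcl[OF that] unfolding closedin_subtopology by (metis inf.commute)
    have fFc: "closedin (subtopology TY C) (f ` fiber F u)" if u: "u \<in> U" for u
    proof -
      define K where "K = TX closure_of fiber F u"
      have sub: "fiber F u \<subseteq> topspace TX" using FuD[OF u] by (auto simp: D_def)
      have Ks: "K \<in> S n" unfolding K_def using clos fiber_in[OF st eg Fs Ul[OF u]] sub by blast
      obtain T where T: "closedin TX T" "fiber F u = T \<inter> D" using Kd[OF u] by blast
      have "K \<subseteq> T" unfolding K_def using T by (intro closure_of_minimal) auto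
      moreover have "fiber F u \<subseteq> K" unfolding K_def using sub closure_of_subset by blast
      ultimately have FK: "fiber F u = K \<inter> D" using T FuD[OF u] by blast
      have Kt: "K \<subseteq> topspace TX" unfolding K_def by (rule closure_of_subset_topspace)
      have "f ` fiber F u = f ` K \<inter> C" using FK Kt by (auto simp: D_def)
      moreover have "closedin TY (f ` K)" using closed Ks unfolding K_def by auto
      ultimately show ?thesis unfolding closedin_subtopology by blast
    qed
    define Q where "Q = (\<lambda>zs::'a list. take k (drop 0 zs) @ take n (drop (k + m) zs) \<in> F \<and> take n (drop (k + m) zs) @ take m (drop k zs) \<in> Gs)"
    define F2 where "F2 = {zs \<in> tuples (k + m). \<exists>x. length x = n \<and> Q (zs @ x)}"
    have F2s: "F2 \<in> S (k + m)"
    proof -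
      have "Def S (k + m + n) Q" unfolding Q_def using st Fs Gs by (intro Def_conj Def_block2) auto
      then show ?thesis using Def_exs[OF st] unfolding F2_def Def_def by blast
    qed
    have F2f: "fiber F2 u = f ` fiber F u" if u: "u \<in> U" for u
    proof (rule set_eqI)
      fix y
      have lu: "length u = k" using Ul[OF u] .
      show "y \<in> fiber F2 u \<longleftrightarrow> y \<in> f ` fiber F u"
      proof
        assume "y \<in> fiber F2 u"
        then have ly: "length y = m" and "\<exists>x. length x = n \<and> Q ((u @ y) @ x)"
          unfolding fiber_def F2_def using lu by (auto simp: tuples_def)
        then obtain x where "length x = n" "u @ x \<in> F" "x @ y \<in> Gs" unfolding Q_def using lu by auto
        then show "y \<in> f ` fiber F u" using Gchar by (auto simp: fiber_def)
      next
        assume "y \<in> f ` fiber F u"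
        then obtain x where x: "u @ x \<in> F" "y = f x" by (auto simp: fiber_def)
        have lx: "length x = n" using Fl[OF x(1) lu] .
        have xt: "x \<in> topspace TX" using FuD[OF u] x by (auto simp: fiber_def D_def)
        have "x @ y \<in> Gs" using Gchar[OF lx] xt x by simp
        then show "y \<in> fiber F2 u" unfolding fiber_def F2_def Q_def
          using lu lx fl[OF xt] x by (auto simp: tuples_def intro!: exI[of _ x])
      qed
    qed
    have dcp: "\<forall>k U F. definable_family S k m U F \<and> U \<noteq> {} \<and>
        (\<forall>u\<in>U. fiber F u \<noteq> {} \<and> closedin (subtopology TY C) (fiber F u)) \<and>
        (\<forall>u\<in>U. \<forall>v\<in>U. \<exists>w\<in>U. fiber F w \<subseteq> fiber F u \<inter> fiber F v)
        \<longrightarrow> (\<Inter>u\<in>U. fiber F u) \<noteq> {}"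
      using dc unfolding definably_compact_def by (rule conjunct2[THEN conjunct2])
    have "(\<Inter>u\<in>U. fiber F2 u) \<noteq> {}"
    proof (rule mp[OF dcp[THEN spec, THEN spec, THEN spec]], intro conjI)
      show "definable_family S k m U F2" using Us F2s by (simp add: definable_family_def)
      show "U \<noteq> {}" by (rule HU)
      show "\<forall>u\<in>U. fiber F2 u \<noteq> {} \<and> closedin (subtopology TY C) (fiber F2 u)"
        using F2f fFc Hne by simp
      show "\<forall>u\<in>U. \<forall>v\<in>U. \<exists>w\<in>U. fiber F2 w \<subseteq> fiber F2 u \<inter> fiber F2 v"
      proof (intro ballI)
        fix u v assume "u \<in> U" "v \<in> U"
        then obtain w where "w \<in> U" "fiber F w \<subseteq> fiber F u \<inter> fiber F v" using Hf by blast
        then show "\<exists>w\<in>U. fiber F2 w \<subseteq> fiber F2 u \<inter> fiber F2 v" using F2f \<open>u \<in> U\<close> \<open>v \<in> U\<close> by blast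
      qed
    qed
    then obtain y where y0: "y \<in> (\<Inter>u\<in>U. fiber F2 u)" by blast
    have y: "\<And>u. u \<in> U \<Longrightarrow> y \<in> f ` fiber F u" using F2f y0 by blast
    obtain u0 where u0: "u0 \<in> U" using HU by blast
    have yC: "y \<in> C" using y[OF u0] FuD[OF u0] by (auto simp: D_def)
    define Phi where "Phi = {x \<in> topspace TX. f x = y}"
    have dphi: "definably_compact S n TX Phi" using fibres yC CY unfolding Phi_def by blast
    have Phis: "Phi \<in> S n" using dphi by (simp add: definably_compact_def)
    have PhiD: "Phi \<subseteq> D" using yC by (auto simp: Phi_def D_def)
    define F3 where "F3 = {zs \<in> tuples (k + n). take (k + n) (drop 0 zs) \<in> F \<and> take n (drop k zs) \<in> Phi}"
    have F3s: "F3 \<in> S (k + n)"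
    proof -
      have "Def S (k + n) (\<lambda>zs. take (k + n) (drop 0 zs) \<in> F \<and> take n (drop k zs) \<in> Phi)"
        using st Fs Phis by (intro Def_conj Def_block) auto
      then show ?thesis unfolding F3_def Def_def .
    qed
    have F3f: "fiber F3 u = fiber F u \<inter> Phi" if u: "u \<in> U" for u
    proof (rule set_eqI)
      fix x
      have lu: "length u = k" using Ul[OF u] .
      show "x \<in> fiber F3 u \<longleftrightarrow> x \<in> fiber F u \<inter> Phi"
      proof
        assume "x \<in> fiber F3 u"
        then have h: "u @ x \<in> tuples (k + n)" "take (k + n) (drop 0 (u @ x)) \<in> F" "take n (drop k (u @ x)) \<in> Phi"
          unfolding fiber_def F3_def by simp_all
        then have lx: "length x = n" using lu by (simp add: tuples_def)
        have "take (k + n) (drop 0 (u @ x)) = u @ x" "take n (drop k (u @ x)) = x" using lu lx by simp_all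
        then show "x \<in> fiber F u \<inter> Phi" using h unfolding fiber_def by simp
      next
        assume h: "x \<in> fiber F u \<inter> Phi"
        then have lx: "length x = n" using Fl lu unfolding fiber_def by blast
        have "take (k + n) (drop 0 (u @ x)) = u @ x" "take n (drop k (u @ x)) = x" "u @ x \<in> tuples (k + n)"
          using lu lx by (simp_all add: tuples_def)
        then show "x \<in> fiber F3 u" using h unfolding fiber_def F3_def by simp
      qed
    qed
    have dcp2: "\<forall>k U F. definable_family S k n U F \<and> U \<noteq> {} \<and>
        (\<forall>u\<in>U. fiber F u \<noteq> {} \<and> closedin (subtopology TX Phi) (fiber F u)) \<and>
        (\<forall>u\<in>U. \<forall>v\<in>U. \<exists>w\<in>U. fiber F w \<subseteq> fiber F u \<inter> fiber F v)
        \<longrightarrow> (\<Inter>u\<in>U. fiber F u) \<noteq> {}"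
      using dphi unfolding definably_compact_def by (rule conjunct2[THEN conjunct2])
    have "(\<Inter>u\<in>U. fiber F3 u) \<noteq> {}"
    proof (rule mp[OF dcp2[THEN spec, THEN spec, THEN spec]], intro conjI)
      show "definable_family S k n U F3" using Us F3s by (simp add: definable_family_def)
      show "U \<noteq> {}" by (rule HU)
      show "\<forall>u\<in>U. fiber F3 u \<noteq> {} \<and> closedin (subtopology TX Phi) (fiber F3 u)"
      proof
        fix u assume u: "u \<in> U"
        obtain T where T: "closedin TX T" "fiber F u = T \<inter> D" using Kd[OF u] by blast
        have "fiber F3 u = T \<inter> Phi" using F3f[OF u] T PhiD by blast
        then have "closedin (subtopology TX Phi) (fiber F3 u)" using T(1) unfolding closedin_subtopology by blast
        moreover have "fiber F3 u \<noteq> {}" using y[OF u] F3f[OF u] FuD[OF u] by (auto simp: Phi_def D_def)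
        ultimately show "fiber F3 u \<noteq> {} \<and> closedin (subtopology TX Phi) (fiber F3 u)" by blast
      qed
      show "\<forall>u\<in>U. \<forall>v\<in>U. \<exists>w\<in>U. fiber F3 w \<subseteq> fiber F3 u \<inter> fiber F3 v"
      proof (intro ballI)
        fix u v assume "u \<in> U" "v \<in> U"
        then obtain w where "w \<in> U" "fiber F w \<subseteq> fiber F u \<inter> fiber F v" using Hf by blast
        then show "\<exists>w\<in>U. fiber F3 w \<subseteq> fiber F3 u \<inter> fiber F3 v" using F3f \<open>u \<in> U\<close> \<open>v \<in> U\<close> by blast
      qed
    qed
    then show "(\<Inter>u\<in>U. fiber F u) \<noteq> {}" using F3f by blast
  qed
qed

end
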